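(* Let $A,B\in\widehat{\mathbb F_q^\times}$ be such that each of $A$, $B$, $AB$, $A\overline B$ has order larger than $2$. Then for all $z\in\mathbb F_q$, $${}_2\mathbb F_1\!\left[\begin{matrix}A&A\phi\\&A^2\end{matrix};z\right]{}_2\mathbb F_1\!\left[\begin{matrix}B&B\phi\\&B^2\end{matrix};z\right]={}_2\mathbb F_1\!\left[\begin{matrix}AB&AB\phi\\&(AB)^2\end{matrix};z\right]+\overline B^2\!\left(\tfrac z4\right){}_2\mathbb F_1\!\left[\begin{matrix}A\overline B&A\overline B\phi\\&(A\overline B)^2\end{matrix};z\right]-\delta(1-z)AB(4),$$ $${}_2\mathbb F_1\!\left[\begin{matrix}A&A\phi\\&\phi\end{matrix};z\right]{}_2\mathbb F_1\!\left[\begin{matrix}B&B\phi\\&\phi\end{matrix};z\right]={}_2\mathbb F_1\!\left[\begin{matrix}AB&AB\phi\\&\phi\end{matrix};z\right]+\overline B^2(1-z)\,{}_2\mathbb F_1\!\left[\begin{matrix}A\overline B&A\overline B\phi\\&\phi\end{matrix};z\right]-\delta(z).$$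
   Context: $\mathbb F_q$ is a finite field with $q$ elements, $q$ a power of an odd prime $p$. $\widehat{\mathbb F_q^\times}$ is the group of multiplicative characters $\chi:\mathbb F_q^\times\to\mathbb C^\times$; every character, including the trivial character $\varepsilon$, is extended to $\mathbb F_q$ by $\chi(0)=0$. $\phi$ is the quadratic character, $\overline\chi$ denotes the complex-conjugate (inverse) character, and products/powers of characters are pointwise. For $x\in\mathbb F_q$, $\delta(x)=1$ if $x=0$ and $0$ otherwise. Jacobi sum: $J(A,B)=\sum_{x\in\mathbb F_q}A(x)B(1-x)$. Period function: ${}_2\mathbb P_1\!\left[\begin{matrix}A&B\\&C\end{matrix};\lambda\right]=\sum_{y\in\mathbb F_q}B(y)\,\overline BC(1-y)\,\overline A(1-\lambda y)$; normalized function ${}_2\mathbb F_1\!\left[\begin{matrix}A&B\\&C\end{matrix};\lambda\right]=\frac{1}{J(B,C\overline B)}\,{}_2\mathbb P_1\!\left[\begin{matrix}A&B\\&C\end{matrix};\lambda\right]$. *)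

theory Defs
  imports Complex_Main
begin

text \<open>Finite field: a type of class finite and field; odd characteristic is
  expressed by 2 \<noteq> 0. Multiplicative characters are functions
  F \<Rightarrow> complex, extended by \<chi>(0) = 0.\<close>

definition mult_char :: "('a::{finite,field} \<Rightarrow> complex) \<Rightarrow> bool" where
  "mult_char \<chi> \<longleftrightarrow> \<chi> 0 = 0 \<and> (\<forall>x. x \<noteq> 0 \<longrightarrow> \<chi> x \<noteq> 0) \<and>
     (\<forall>x y. x \<noteq> 0 \<longrightarrow> y \<noteq> 0 \<longrightarrow> \<chi> (x * y) = \<chi> x * \<chi> y)"

definition char_order :: "('a::{finite,field} \<Rightarrow> complex) \<Rightarrow> nat" where
  "char_order \<chi> = (LEAST n. n > 0 \<and> (\<forall>x. x \<noteq> 0 \<longrightarrow> \<chi> x ^ n = 1))"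

definition char_mult :: "('a \<Rightarrow> complex) \<Rightarrow> ('a \<Rightarrow> complex) \<Rightarrow> 'a \<Rightarrow> complex" where
  "char_mult A B = (\<lambda>x. A x * B x)"

definition char_conj :: "('a \<Rightarrow> complex) \<Rightarrow> 'a \<Rightarrow> complex" where
  "char_conj A = (\<lambda>x. cnj (A x))"

definition char_pow :: "('a \<Rightarrow> complex) \<Rightarrow> nat \<Rightarrow> 'a \<Rightarrow> complex" where
  "char_pow A n = (\<lambda>x. A x ^ n)"

definition qchar :: "'a::{finite,field} \<Rightarrow> complex" where
  "qchar x = (if x = 0 then 0 else if (\<exists>y. y ^ 2 = x) then 1 else -1)"

definition kdelta :: "'a::{finite,field} \<Rightarrow> complex" where
  "kdelta x = (if x = 0 then 1 else 0)"

definition jacobi :: "('a::{finite,field} \<Rightarrow> complex) \<Rightarrow> ('a \<Rightarrow> complex) \<Rightarrow> complex" where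
  "jacobi A B = (\<Sum>x\<in>UNIV. A x * B (1 - x))"

definition P21 :: "('a::{finite,field} \<Rightarrow> complex) \<Rightarrow> ('a \<Rightarrow> complex) \<Rightarrow> ('a \<Rightarrow> complex) \<Rightarrow> 'a \<Rightarrow> complex" where
  "P21 A B C lam = (\<Sum>y\<in>UNIV. B y * char_mult (char_conj B) C (1 - y) * char_conj A (1 - lam * y))"

definition F21 :: "('a::{finite,field} \<Rightarrow> complex) \<Rightarrow> ('a \<Rightarrow> complex) \<Rightarrow> ('a \<Rightarrow> complex) \<Rightarrow> 'a \<Rightarrow> complex" where
  "F21 A B C lam = P21 A B C lam / jacobi B (char_mult C (char_conj B))"

end

theory Submission
  imports Defs
begin


lemma card_ge2: "card (UNIV::'a set) \<ge> 2" if "(x::'a::{finite,field}) = x"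
proof -
  have "{0::'a,1} \<subseteq> UNIV" by simp
  hence "card {0::'a,1} \<le> card (UNIV::'a set)" by (rule card_mono[OF finite_UNIV])
  thus ?thesis by simp
qed

lemma fermat_field:
  fixes x :: "'a::{finite,field}"
  assumes "x \<noteq> 0"
  shows "x ^ (card (UNIV::'a set) - 1) = 1"
proof -
  let ?U = "UNIV - {0::'a}"
  have "prod (\<lambda>y. x * y) ?U = prod id ?U"
    by (rule prod.reindex_bij_witness[where i="\<lambda>y. inverse x * y" and j="\<lambda>y. x * y"])
       (use assms in \<open>auto simp: field_simps\<close>)
  moreover have "prod (\<lambda>y. x * y) ?U = x ^ card ?U * prod id ?U"
    by (simp add: prod.distrib)
  moreover have "prod id ?U \<noteq> 0" by (simp add: prod_zero_iff)
  moreover have "card ?U = card (UNIV::'a set) - 1" by (simp add: card_Diff_singleton)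
  ultimately show ?thesis by (metis mult_cancel_right2)
qed

lemma mc_zero[simp]: "mult_char \<chi> \<Longrightarrow> \<chi> 0 = 0" by (simp add: mult_char_def)
lemma mc_nz: "mult_char \<chi> \<Longrightarrow> x \<noteq> 0 \<Longrightarrow> \<chi> x \<noteq> 0" by (simp add: mult_char_def)
lemma mc_mult[simp]: "mult_char \<chi> \<Longrightarrow> \<chi> (x * y) = \<chi> x * \<chi> y"
  by (cases "x = 0 \<or> y = 0") (auto simp: mult_char_def)
lemma mc_one[simp]: "mult_char \<chi> \<Longrightarrow> \<chi> 1 = 1"
proof -
  assume m: "mult_char \<chi>"
  have "\<chi> 1 = \<chi> 1 * \<chi> 1" using mc_mult[OF m, of 1 1] by simp
  moreover have "\<chi> 1 \<noteq> 0" using mc_nz[OF m] by simp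
  ultimately show ?thesis by (metis mult_cancel_right2)
qed
lemma mc_inv: "mult_char \<chi> \<Longrightarrow> x \<noteq> 0 \<Longrightarrow> \<chi> (inverse x) * \<chi> x = 1"
  by (metis mc_mult mc_one left_inverse)
lemma mc_power: "mult_char \<chi> \<Longrightarrow> \<chi> (x ^ n) = \<chi> x ^ n"
  by (induction n) auto
lemma mc_norm: "mult_char (\<chi>::'a::{finite,field} \<Rightarrow> complex) \<Longrightarrow> x \<noteq> 0 \<Longrightarrow> norm (\<chi> x) = 1"
proof -
  assume m: "mult_char \<chi>" and x: "x \<noteq> 0"
  have "\<chi> x ^ (card (UNIV::'a set) - 1) = 1" using mc_power[OF m, of x "card (UNIV::'a set) - 1"] fermat_field[OF x] m by (metis mc_one)
  hence "norm (\<chi> x) ^ (card (UNIV::'a set) - 1) = 1" by (metis norm_one norm_power)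
  moreover have "card (UNIV::'a set) - 1 \<noteq> 0" using card_ge2[of x] by simp
  ultimately show ?thesis using power_eq_imp_eq_base[of "norm (\<chi> x)" "card (UNIV::'a set) - 1" 1] by simp
qed
lemma mc_cnj: "mult_char (\<chi>::'a::{finite,field} \<Rightarrow> complex) \<Longrightarrow> cnj (\<chi> x) = \<chi> (inverse x)"
proof (cases "x = 0")
  case True assume m: "mult_char \<chi>" thus ?thesis using True by simp
next
  case False assume m: "mult_char \<chi>"
  have "\<chi> x * cnj (\<chi> x) = 1"
    using complex_norm_square[of "\<chi> x"] mc_norm[OF m False] by simp
  moreover have "\<chi> x * \<chi> (inverse x) = 1" using mc_inv[OF m False] by (simp add: mult.commute)
  moreover have "\<chi> x \<noteq> 0" using mc_nz[OF m False] .
  ultimately show ?thesis by (metis mult_left_cancel)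
qed
lemma mc_m1: "mult_char \<chi> \<Longrightarrow> \<chi> (-1) * \<chi> (-1) = 1"
  using mc_mult[of \<chi> "-1" "-1"] mc_one[of \<chi>] by simp



lemma sq_roots:
  fixes r :: "'a::field"
  shows "{y. y^2 = r^2} = {r, -r}"
  using power2_eq_iff[of _ r] by blast

lemma neg_ne:
  fixes r :: "'a::field"
  assumes "(2::'a) \<noteq> 0" "r \<noteq> 0" shows "r \<noteq> -r"
proof
  assume "r = -r" hence "2 * r = 0" by (metis mult_2 neg_eq_iff_add_eq_0)
  thus False using assms by simp
qed

definition isq :: "'a::field \<Rightarrow> bool" where "isq x \<longleftrightarrow> (\<exists>y. y^2 = x)"

lemma qchar_simp: "qchar x = (if x = 0 then 0 else if isq x then 1 else -1)"
  by (simp add: qchar_def isq_def)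

lemma isq_mult: "isq x \<Longrightarrow> isq y \<Longrightarrow> isq (x * y)"
  unfolding isq_def by (metis power_mult_distrib)

lemma count_sq:
  fixes dummy :: "'a::{finite,field}"
  assumes two: "(2::'a) \<noteq> 0"
  shows "card (UNIV - {0::'a}) = 2 * card {x::'a. x \<noteq> 0 \<and> isq x}"
proof -
  let ?U = "UNIV - {0::'a}" and ?Q = "{x::'a. x \<noteq> 0 \<and> isq x}"
  have "(\<Sum>q\<in>?Q. \<Sum>y\<in>{y\<in>?U. y^2 = q}. (1::nat)) = (\<Sum>y\<in>?U. 1)"
    by (rule sum.group) (auto simp: isq_def)
  moreover have "(\<Sum>y\<in>{y\<in>?U. y^2 = q}. (1::nat)) = 2" if "q \<in> ?Q" for q
  proof -
    from that have "isq q" by simp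
    then obtain r where r: "r^2 = q" unfolding isq_def by blast
    have "r \<noteq> 0" using r that by auto
    hence "{y\<in>?U. y^2 = q} = {r, -r}" using sq_roots[of r] r by auto
    thus ?thesis using neg_ne[OF two \<open>r \<noteq> 0\<close>] by simp
  qed
  ultimately show ?thesis by simp
qed

lemma nonsq_mult:
  fixes a b :: "'a::{finite,field}"
  assumes two: "(2::'a) \<noteq> 0" and a: "a \<noteq> 0" "\<not> isq a" and b: "b \<noteq> 0" "\<not> isq b"
  shows "isq (a * b)"
proof -
  let ?U = "UNIV - {0::'a}" and ?Q = "{x::'a. x \<noteq> 0 \<and> isq x}"
  let ?N = "{x::'a. x \<noteq> 0 \<and> \<not> isq x}"
  have "?U = ?Q \<union> ?N" "?Q \<inter> ?N = {}" by auto
  hence "card ?U = card ?Q + card ?N" by (simp add: card_Un_disjoint)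
  hence cN: "card ?N = card ?Q" using count_sq[OF two] by simp
  have sub: "(\<lambda>s. a * s) ` ?Q \<subseteq> ?N"
  proof
    fix x assume "x \<in> (\<lambda>s. a * s) ` ?Q"
    then obtain s where s: "s \<noteq> 0" "isq s" "x = a * s" by auto
    obtain r where r: "r^2 = s" using s by (auto simp: isq_def)
    have "r \<noteq> 0" using r s by auto
    have "\<not> isq x"
    proof
      assume "isq x" then obtain u where "u^2 = a * s" using s by (auto simp: isq_def)
      hence "(u / r)^2 = a" using r \<open>r \<noteq> 0\<close> s(1) by (simp add: power_divide)
      thus False using a by (auto simp: isq_def)
    qed
    thus "x \<in> ?N" using s a by auto
  qed
  have "inj_on (\<lambda>s. a * s) ?Q" using a by (auto simp: inj_on_def)
  hence "card ((\<lambda>s. a * s) ` ?Q) = card ?N" using cN by (simp add: card_image)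
  hence "(\<lambda>s. a * s) ` ?Q = ?N" using sub by (simp add: card_subset_eq)
  hence "b \<in> (\<lambda>s. a * s) ` ?Q" using b by auto
  then obtain s where s: "isq s" "b = a * s" by auto
  have "isq (a * a)" unfolding isq_def by (metis power2_eq_square)
  thus ?thesis using s isq_mult by (metis mult.assoc)
qed

lemma exists_nonsq:
  fixes dummy :: "'a::{finite,field}"
  assumes two: "(2::'a) \<noteq> 0"
  shows "\<exists>a::'a. a \<noteq> 0 \<and> \<not> isq a"
proof (rule ccontr)
  assume "\<not> ?thesis"
  hence "{x::'a. x \<noteq> 0 \<and> isq x} = UNIV - {0}" by auto
  hence "card (UNIV - {0::'a}) = 2 * card (UNIV - {0::'a})" using count_sq[OF two] by simp
  moreover have "card (UNIV - {0::'a}) \<noteq> 0"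
  proof -
    have "(1::'a) \<in> UNIV - {0}" by simp
    thus ?thesis by (metis card_0_eq empty_iff finite)
  qed
  ultimately show False by simp
qed

lemma qchar_mc:
  assumes two: "(2::'a::{finite,field}) \<noteq> 0"
  shows "mult_char (qchar :: 'a \<Rightarrow> complex)"
  unfolding mult_char_def
proof (intro conjI allI impI)
  fix x y :: 'a assume x: "x \<noteq> 0" and y: "y \<noteq> 0"
  have "isq (x*y) = (isq x = isq y)"
  proof (cases "isq x"; cases "isq y")
    assume "isq x" "isq y" thus ?thesis using isq_mult by auto
  next
    assume "isq x" "\<not> isq y"
    then obtain r where r: "r^2 = x" by (auto simp: isq_def)
    have "r \<noteq> 0" using r x by auto
    have "\<not> isq (x * y)"
    proof
      assume "isq (x*y)" then obtain u where "u^2 = x * y" by (auto simp: isq_def)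
      hence "(u/r)^2 = y" using r \<open>r \<noteq> 0\<close> x by (simp add: power_divide)
      thus False using \<open>\<not> isq y\<close> by (auto simp: isq_def)
    qed
    thus ?thesis using \<open>isq x\<close> \<open>\<not> isq y\<close> by simp
  next
    assume "\<not> isq x" "isq y"
    then obtain r where r: "r^2 = y" by (auto simp: isq_def)
    have "r \<noteq> 0" using r y by auto
    have "\<not> isq (x * y)"
    proof
      assume "isq (x*y)" then obtain u where "u^2 = x * y" by (auto simp: isq_def)
      hence "(u/r)^2 = x" using r \<open>r \<noteq> 0\<close> y by (simp add: power_divide)
      thus False using \<open>\<not> isq x\<close> by (auto simp: isq_def)
    qed
    thus ?thesis using \<open>\<not> isq x\<close> \<open>isq y\<close> by simp
  next
    assume "\<not> isq x" "\<not> isq y" thus ?thesis using nonsq_mult[OF two] x y by auto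
  qed
  thus "qchar (x*y) = qchar x * (qchar y :: complex)" using x y by (auto simp: qchar_simp)
qed (auto simp: qchar_simp)



lemma qchar_sq[simp]: "y \<noteq> 0 \<Longrightarrow> qchar (y^2) = 1"
  by (auto simp: qchar_simp isq_def)
lemma qchar_sq'[simp]: "y \<noteq> 0 \<Longrightarrow> qchar (y*y) = 1"
  using qchar_sq[of y] by (simp add: power2_eq_square)
lemma qchar_0[simp]: "qchar 0 = 0" by (simp add: qchar_def)
lemma qchar_11: "x \<noteq> 0 \<Longrightarrow> qchar x * qchar x = 1"
  by (auto simp: qchar_simp)
lemma qchar_cnj[simp]: "cnj (qchar x) = qchar x"
  by (auto simp: qchar_simp)
lemma qchar_inv:
  assumes two: "(2::'a::{finite,field}) \<noteq> 0" shows "qchar (inverse (x::'a)) = qchar x"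
proof (cases "x = 0")
  case False
  have "qchar (inverse x) * qchar x = 1" using mc_inv[OF qchar_mc[OF two] False] .
  have "qchar (inverse x) = qchar (inverse x) * (qchar x * (qchar x :: complex))" using qchar_11[OF False] by simp
  also have "\<dots> = qchar x" using \<open>qchar (inverse x) * qchar x = 1\<close> by (simp add: mult.assoc[symmetric])
  finally show ?thesis .
qed simp

lemma roots_set:
  fixes v :: "'a::{finite,field}"
  shows "{w. w^2 = v} = (if v = 0 then {0} else if isq v then {SOME u. u^2 = v, -(SOME u. u^2 = v)} else {})"
proof -
  consider "v = 0" | "v \<noteq> 0" "isq v" | "v \<noteq> 0" "\<not> isq v" by blast
  thus ?thesis
  proof cases
    case 1 thus ?thesis by auto
  next
    case 2
    hence "(SOME u. u^2 = v)^2 = v" unfolding isq_def by (metis (mono_tags) someI_ex)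
    thus ?thesis using sq_roots[of "SOME u. u^2 = v"] 2 by simp
  next
    case 3 thus ?thesis by (auto simp: isq_def)
  qed
qed

lemma roots_card:
  fixes v :: "'a::{finite,field}"
  assumes two: "(2::'a) \<noteq> 0"
  shows "of_nat (card {w. w^2 = v}) = 1 + (qchar v :: complex)"
proof -
  consider "v = 0" | "v \<noteq> 0" "isq v" | "v \<noteq> 0" "\<not> isq v" by blast
  thus ?thesis
  proof cases
    case 1 thus ?thesis by (simp add: qchar_simp)
  next
    case 2
    define u where "u = (SOME u. u^2 = v)"
    have u: "u^2 = v" unfolding u_def using 2 unfolding isq_def by (metis (mono_tags) someI_ex)
    hence "u \<noteq> 0" using 2 by auto
    hence "card {w. w^2 = v} = 2" using sq_roots[of u] u neg_ne[OF two] by simp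
    thus ?thesis using 2 by (simp add: qchar_simp)
  next
    case 3 hence "{w. w^2 = v} = {}" by (auto simp: isq_def)
    thus ?thesis using 3 by (simp add: qchar_simp)
  qed
qed

lemma char_sum_zero:
  fixes \<chi> :: "'a::{finite,field} \<Rightarrow> complex"
  assumes m: "mult_char \<chi>" and a: "a \<noteq> 0" "\<chi> a \<noteq> 1"
  shows "(\<Sum>x\<in>UNIV. \<chi> x) = 0"
proof -
  have "(\<Sum>x\<in>UNIV. \<chi> x) = (\<Sum>x\<in>UNIV. \<chi> (a * x))"
    by (rule sum.reindex_bij_witness[where j="\<lambda>y. inverse a * y" and i="\<lambda>y. a * y"])
       (use a in \<open>auto simp: field_simps\<close>)
  also have "\<dots> = \<chi> a * (\<Sum>x\<in>UNIV. \<chi> x)" using m by (simp add: sum_distrib_left)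
  finally show ?thesis using a(2) by (metis mult_cancel_right1 mult.commute)
qed

lemma mc_prod: "mult_char \<chi> \<Longrightarrow> mult_char \<psi> \<Longrightarrow> mult_char (\<lambda>x. \<chi> x * \<psi> x)"
  unfolding mult_char_def by auto

lemma sum_minus1:
  fixes f :: "'a::{finite,field} \<Rightarrow> complex"
  shows "(\<Sum>t\<in>UNIV - {a}. f t) = (\<Sum>t\<in>UNIV. f t) - f a"
  by (simp add: sum_diff1)

lemma jac_inner:
  fixes \<psi> :: "'a::{finite,field} \<Rightarrow> complex"
  assumes mp: "mult_char \<psi>" and b: "b \<noteq> 0" "\<psi> b \<noteq> 1" and t: "t \<noteq> 1"
  shows "(\<Sum>y\<in>UNIV - {0,1}. \<psi> ((1 - t*y) / (1 - y))) = -1 - \<psi> t"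
proof -
  have "(\<Sum>y\<in>UNIV - {0,1}. \<psi> ((1 - t*y) / (1 - y))) = (\<Sum>r\<in>UNIV - {1,t}. \<psi> r)"
  proof (rule sum.reindex_bij_witness[where i="\<lambda>r. (1 - r) / (t - r)" and j="\<lambda>y. (1 - t*y) / (1 - y)"])
    fix r assume r: "r \<in> UNIV - {1, t}"
    have "t - r \<noteq> 0" "1 - r \<noteq> 0" using r by auto
    have "t - 1 \<noteq> 0" using t by simp
    show "(1 - r) / (t - r) \<in> UNIV - {0, 1}" using r \<open>t - 1 \<noteq> 0\<close> \<open>t - r \<noteq> 0\<close> \<open>1 - r \<noteq> 0\<close>
      by (auto simp: field_simps)
    have n: "1 - t * ((1 - r) / (t - r)) = r * (t - 1) / (t - r)"
      using \<open>t - r \<noteq> 0\<close> by (simp add: field_simps)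
    have d: "1 - (1 - r) / (t - r) = (t - 1) / (t - r)"
      using \<open>t - r \<noteq> 0\<close> by (simp add: field_simps)
    show "(1 - t * ((1 - r) / (t - r))) / (1 - (1 - r) / (t - r)) = r"
      unfolding n d using \<open>t - r \<noteq> 0\<close> \<open>t - 1 \<noteq> 0\<close> by simp
  next
    fix y :: 'a assume y: "y \<in> UNIV - {0, 1}"
    have "1 - y \<noteq> 0" "y \<noteq> 0" using y by auto
    have "t - 1 \<noteq> 0" using t by simp
    show "(1 - t * y) / (1 - y) \<in> UNIV - {1, t}"
      using \<open>1 - y \<noteq> 0\<close> \<open>y \<noteq> 0\<close> \<open>t - 1 \<noteq> 0\<close> by (auto simp: field_simps)
    have n: "1 - (1 - t * y) / (1 - y) = y * (t - 1) / (1 - y)"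
      using \<open>1 - y \<noteq> 0\<close> by (simp add: field_simps; simp add: algebra_simps)
    have d: "t - (1 - t * y) / (1 - y) = (t - 1) / (1 - y)"
      using \<open>1 - y \<noteq> 0\<close> by (simp add: field_simps; simp add: algebra_simps)
    show "(1 - (1 - t * y) / (1 - y)) / (t - (1 - t * y) / (1 - y)) = y"
      unfolding n d using \<open>1 - y \<noteq> 0\<close> \<open>t - 1 \<noteq> 0\<close> by simp
  qed auto
  also have "\<dots> = (\<Sum>r\<in>UNIV. \<psi> r) - \<psi> 1 - \<psi> t"
    using t by (simp add: sum_diff)
  also have "\<dots> = -1 - \<psi> t" using char_sum_zero[OF mp b] mp by simp
  finally show ?thesis .
qed



lemma jac_norm:
  fixes \<chi> \<psi> :: "'a::{finite,field} \<Rightarrow> complex"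
  assumes mc: "mult_char \<chi>" and mp: "mult_char \<psi>"
    and a: "a \<noteq> 0" "\<chi> a \<noteq> 1" and b: "b \<noteq> 0" "\<psi> b \<noteq> 1" and c: "c \<noteq> 0" "\<chi> c * \<psi> c \<noteq> 1"
  shows "(\<Sum>x\<in>UNIV. \<chi> x * \<psi> (1 - x)) * (\<Sum>y\<in>UNIV. \<chi> (inverse y) * \<psi> (inverse (1 - y)))
         = of_nat (card (UNIV::'a set))"
proof -
  let ?Y = "UNIV - {0::'a, 1}"
  let ?q = "card (UNIV::'a set)"
  have "(\<Sum>x\<in>UNIV. \<chi> x * \<psi> (1 - x)) * (\<Sum>y\<in>UNIV. \<chi> (inverse y) * \<psi> (inverse (1 - y)))
      = (\<Sum>y\<in>UNIV. \<Sum>x\<in>UNIV. \<chi> x * \<psi> (1 - x) * (\<chi> (inverse y) * \<psi> (inverse (1 - y))))"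
    unfolding sum_product by (rule sum.swap)
  also have "\<dots> = (\<Sum>y\<in>?Y. \<Sum>x\<in>UNIV. \<chi> x * \<psi> (1 - x) * (\<chi> (inverse y) * \<psi> (inverse (1 - y))))"
    by (rule sum.mono_neutral_right) (use mc mp in auto)
  also have "\<dots> = (\<Sum>y\<in>?Y. \<Sum>t\<in>UNIV. \<chi> t * \<psi> ((1 - t*y) / (1 - y)))"
  proof (rule sum.cong[OF refl])
    fix y assume y: "y \<in> ?Y"
    hence y0: "y \<noteq> 0" by auto
    have "(\<Sum>x\<in>UNIV. \<chi> x * \<psi> (1 - x) * (\<chi> (inverse y) * \<psi> (inverse (1 - y))))
        = (\<Sum>t\<in>UNIV. \<chi> (t*y) * \<psi> (1 - t*y) * (\<chi> (inverse y) * \<psi> (inverse (1 - y))))"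
      by (rule sum.reindex_bij_witness[where i="\<lambda>x. x * y" and j="\<lambda>x. x / y"]) (use y0 in auto)
    also have "\<dots> = (\<Sum>t\<in>UNIV. \<chi> t * \<psi> ((1 - t*y) / (1 - y)))"
    proof (rule sum.cong[OF refl])
      fix t
      have "\<chi> (t*y) * \<psi> (1 - t*y) * (\<chi> (inverse y) * \<psi> (inverse (1 - y)))
          = \<chi> t * (\<chi> (inverse y) * \<chi> y) * \<psi> ((1 - t*y) * inverse (1 - y))"
        using mc mp by simp
      also have "\<dots> = \<chi> t * \<psi> ((1 - t*y) / (1 - y))"
        using mc_inv[OF mc y0] by (simp add: divide_inverse)
      finally show "\<chi> (t*y) * \<psi> (1 - t*y) * (\<chi> (inverse y) * \<psi> (inverse (1 - y)))
          = \<chi> t * \<psi> ((1 - t*y) / (1 - y))" .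
    qed
    finally show "(\<Sum>x\<in>UNIV. \<chi> x * \<psi> (1 - x) * (\<chi> (inverse y) * \<psi> (inverse (1 - y))))
        = (\<Sum>t\<in>UNIV. \<chi> t * \<psi> ((1 - t*y) / (1 - y)))" .
  qed
  also have "\<dots> = (\<Sum>t\<in>UNIV. \<chi> t * (\<Sum>y\<in>?Y. \<psi> ((1 - t*y) / (1 - y))))"
    unfolding sum_distrib_left by (rule sum.swap)
  also have "\<dots> = (\<Sum>t\<in>UNIV. if t = 1 then of_nat ?q - 2 else \<chi> t * (-1 - \<psi> t))"
  proof (rule sum.cong[OF refl])
    fix t :: 'a
    show "\<chi> t * (\<Sum>y\<in>?Y. \<psi> ((1 - t*y) / (1 - y))) = (if t = 1 then of_nat ?q - 2 else \<chi> t * (-1 - \<psi> t))"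
    proof (cases "t = 1")
      case True
      have "(\<Sum>y\<in>?Y. \<psi> ((1 - t*y) / (1 - y))) = (\<Sum>y\<in>?Y. 1)"
        by (rule sum.cong[OF refl]) (use True mp in auto)
      also have "\<dots> = of_nat (?q - 2)" by (simp add: card_Diff_subset)
      also have "\<dots> = of_nat ?q - 2" using card_ge2[of t] by (simp add: of_nat_diff)
      finally show ?thesis using True mc by simp
    next
      case False thus ?thesis using jac_inner[OF mp b False] by simp
    qed
  qed
  also have "\<dots> = (of_nat ?q - 2) + (\<Sum>t\<in>UNIV - {1}. if t = 1 then of_nat ?q - 2 else \<chi> t * (-1 - \<psi> t))"
    by (subst sum.remove[of UNIV 1]) simp_all
  also have "(\<Sum>t\<in>UNIV - {1}. if t = 1 then of_nat ?q - 2 else \<chi> t * (-1 - \<psi> t)) = (\<Sum>t\<in>UNIV - {1}. \<chi> t * (-1 - \<psi> t))"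
    by (rule sum.cong) auto
  also have "(\<Sum>t\<in>UNIV - {1}. \<chi> t * (-1 - \<psi> t)) = - (\<Sum>t\<in>UNIV - {1}. \<chi> t) - (\<Sum>t\<in>UNIV - {1}. \<chi> t * \<psi> t)"
    by (simp add: algebra_simps sum_subtractf sum_negf)
  also have "(\<Sum>t\<in>UNIV - {1}. \<chi> t) = -1"
    using char_sum_zero[OF mc a] mc by (simp add: sum_diff1)
  also have "(\<Sum>t\<in>UNIV - {1}. \<chi> t * \<psi> t) = -1"
    using char_sum_zero[OF mc_prod[OF mc mp] c] mc mp by (simp add: sum_diff1)
  finally show ?thesis by simp
qed

lemma jac_nz:
  fixes \<chi> \<psi> :: "'a::{finite,field} \<Rightarrow> complex"
  assumes mc: "mult_char \<chi>" and mp: "mult_char \<psi>"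
    and a: "a \<noteq> 0" "\<chi> a \<noteq> 1" and b: "b \<noteq> 0" "\<psi> b \<noteq> 1" and c: "c \<noteq> 0" "\<chi> c * \<psi> c \<noteq> 1"
  shows "(\<Sum>x\<in>UNIV. \<chi> x * \<psi> (1 - x)) \<noteq> 0"
  using jac_norm[OF assms] card_ge2[of a] by auto



locale chr =
  fixes A :: "'a::{finite,field} \<Rightarrow> complex"
  assumes two: "(2::'a) \<noteq> 0" and mc: "mult_char A"
    and ntriv: "\<exists>a. a \<noteq> 0 \<and> A a \<noteq> 1" and nphi: "\<exists>b. b \<noteq> 0 \<and> A b \<noteq> qchar b"
begin

lemma qm: "mult_char (qchar :: 'a \<Rightarrow> complex)" using qchar_mc[OF two] .
lemma Amult[simp]: "A (x * y) = A x * A y" using mc by simp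
lemma qmult[simp]: "qchar ((x::'a) * y) = qchar x * (qchar y :: complex)" using qm by simp
lemma A0[simp]: "A 0 = 0" using mc by simp
lemma A1[simp]: "A 1 = 1" using mc by simp
lemma qinv[simp]: "qchar (inverse (x::'a)) = (qchar x :: complex)" using qchar_inv[OF two] .
lemma Ainv: "x \<noteq> 0 \<Longrightarrow> A (inverse x) * A x = 1" using mc_inv[OF mc] .

definition ff :: "'a \<Rightarrow> 'a \<Rightarrow> complex" where
  "ff l y = qchar y * A (y * inverse (1 - y) * inverse (1 - l*y))"
definition kap :: complex where
  "kap = (\<Sum>k\<in>UNIV. qchar k * A (inverse (k - 1)))"

lemma ff_nonsq:
  assumes l: "l \<noteq> 0" "\<not> isq l"
  shows "(\<Sum>y\<in>UNIV. ff l y) = 0"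
proof -
  have ql: "qchar l = (-1::complex)" using l by (simp add: qchar_simp)
  have "(\<Sum>y\<in>UNIV. ff l y) = (\<Sum>y\<in>UNIV. ff l (inverse (l*y)))"
    by (rule sum.reindex_bij_witness[where i="\<lambda>y. inverse (l*y)" and j="\<lambda>y. inverse (l*y)"])
       (use l in \<open>auto simp: field_simps\<close>)
  also have "\<dots> = (\<Sum>y\<in>UNIV. - ff l y)"
  proof (rule sum.cong[OF refl])
    fix y :: 'a
    show "ff l (inverse (l*y)) = - ff l y"
    proof (cases "y = 0")
      case True thus ?thesis by (simp add: ff_def)
    next
      case y: False
      have id: "inverse (l*y) * inverse (1 - inverse (l*y)) * inverse (1 - l * inverse (l*y))
             = y * inverse (1 - y) * inverse (1 - l*y)"
      proof (cases "y = 1 \<or> l * y = 1")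
        case True thus ?thesis using l y by (auto simp: field_simps)
      next
        case False
        hence "1 - y \<noteq> 0" "1 - l*y \<noteq> 0" by auto
        thus ?thesis using l y by (simp add: field_simps; simp add: algebra_simps)
      qed
      show ?thesis unfolding ff_def using ql by (simp only: id qinv qmult) simp
    qed
  qed
  finally have "(\<Sum>y\<in>UNIV. ff l y) = - (\<Sum>y\<in>UNIV. ff l y)" by (simp add: sum_negf)
  thus ?thesis by simp
qed

lemma ff_zero: "(\<Sum>y\<in>UNIV. ff 0 y) = kap"
  unfolding kap_def
proof (rule sum.reindex_bij_witness[where i="inverse" and j="inverse"])
  fix k :: 'a
  show "qchar (inverse k) * A (inverse (inverse k - 1)) = ff 0 k"
  proof (cases "k = 0")
    case True thus ?thesis by (simp add: ff_def)
  next
    case False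
    hence "inverse (inverse k - 1) = k * inverse (1 - k)"
      by (cases "k = 1") (simp_all add: field_simps)
    thus ?thesis by (simp add: ff_def)
  qed
qed auto

end


context chr begin

lemma Am1: "A (-1) * A (-1) = 1" using mc_m1[OF mc] .
lemma Aneg: "A (- (x::'a)) = A (-1) * A x" by (metis Amult mult_minus1)
lemma qneg: "qchar (- (x::'a)) = qchar (-1::'a) * (qchar x :: complex)" by (metis qmult mult_minus1)

lemma stepa:
  assumes w: "w \<noteq> 0"
  shows "(\<Sum>y\<in>UNIV. ff (w^2) y) = qchar w * (\<Sum>t\<in>UNIV. qchar t * A (t * inverse (w - t) * inverse (1 - w*t)))"
proof -
  have "(\<Sum>y\<in>UNIV. ff (w^2) y) = (\<Sum>t\<in>UNIV. ff (w^2) (t / w))"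
    by (rule sum.reindex_bij_witness[where i="\<lambda>t. t / w" and j="\<lambda>y. y * w"]) (use w in auto)
  also have "\<dots> = (\<Sum>t\<in>UNIV. qchar w * (qchar t * A (t * inverse (w - t) * inverse (1 - w*t))))"
  proof (rule sum.cong[OF refl])
    fix t :: 'a
    have id: "(t/w) * inverse (1 - t/w) * inverse (1 - w^2*(t/w)) = t * inverse (w - t) * inverse (1 - w*t)"
    proof (cases "t = w \<or> w * t = 1")
      case True thus ?thesis using w by (auto simp: field_simps power2_eq_square)
    next
      case False hence "w - t \<noteq> 0" "1 - w*t \<noteq> 0" by auto
      thus ?thesis using w by (simp add: field_simps power2_eq_square)
    qed
    have "qchar (t / w) = qchar t * (qchar w :: complex)" by (simp add: divide_inverse)
    thus "ff (w^2) (t / w) = qchar w * (qchar t * A (t * inverse (w - t) * inverse (1 - w*t)))"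
      unfolding ff_def by (simp only: id) simp
  qed
  finally show ?thesis by (simp add: sum_distrib_left)
qed

definition corr :: "'a \<Rightarrow> complex" where
  "corr w = qchar (-1::'a) * A (-1) * A (inverse (1 + w))^2"
definition GG :: "'a \<Rightarrow> 'a \<Rightarrow> complex" where
  "GG w m = qchar (m + 2) * A (inverse (w*m - 1 - w^2))"
definition HH :: "'a \<Rightarrow> 'a \<Rightarrow> complex" where
  "HH w m = A (inverse (w*m - 1 - w^2))"

lemma stepb:
  assumes t: "t \<noteq> 0"
  shows "qchar t * A (t * inverse (w - t) * inverse (1 - w*t)) = GG w (t + inverse t) + (if t = -1 then corr w else 0)"
proof (cases "t = -1")
  case True
  have "A (-1 * inverse (w + 1) * inverse (1 + w)) = A (-1) * A (inverse (1 + w))^2"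
    using Aneg[of "inverse (1 + w) * inverse (1 + w)"] by (simp add: power2_eq_square add.commute)
  moreover have "GG w (-1 + inverse (-1)) = 0" by (simp add: GG_def)
  ultimately show ?thesis using True by (simp add: corr_def)
next
  case False
  have "t + 1 \<noteq> 0" using False by (simp add: eq_neg_iff_add_eq_0[symmetric])
  have e1: "t + inverse t + 2 = (t+1) * (t+1) * inverse t" using t by (simp add: field_simps)
  have "qchar (t + inverse t + 2) = (qchar t :: complex)"
    unfolding e1 using qchar_11[OF \<open>t + 1 \<noteq> 0\<close>] by simp
  moreover have "t * inverse (w - t) * inverse (1 - w*t) = inverse (w * (t + inverse t) - 1 - w^2)"
  proof (cases "w = t \<or> w * t = 1")
    case True thus ?thesis using t by (auto simp: field_simps power2_eq_square)
  next
    case False hence "w - t \<noteq> 0" "1 - w*t \<noteq> 0" by auto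
    thus ?thesis using t by (simp add: field_simps power2_eq_square; simp add: algebra_simps)
  qed
  ultimately show ?thesis using False by (simp add: GG_def)
qed

end


context chr begin

lemma four_nz: "(4::'a) \<noteq> 0"
proof -
  have "(4::'a) = 2 * 2" by simp
  thus ?thesis using two by (metis mult_eq_0_iff)
qed

lemma fiber_card:
  fixes m :: 'a
  shows "card {t. t \<noteq> 0 \<and> t + inverse t = m} = card {s. s^2 = m^2 - 4}"
proof -
  have "card {t. t \<noteq> 0 \<and> t + inverse t = m} = (\<Sum>t\<in>{t. t \<noteq> 0 \<and> t + inverse t = m}. (1::nat))"
    by simp
  also have "\<dots> = (\<Sum>s\<in>{s. s^2 = m^2 - 4}. 1)"
  proof (rule sum.reindex_bij_witness[where j="\<lambda>t. 2*t - m" and i="\<lambda>s. (s + m) / 2"])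
    fix t assume "t \<in> {t. t \<noteq> 0 \<and> t + inverse t = m}"
    hence t: "t \<noteq> 0" "m = t + inverse t" by auto
    show "(2*t - m + m) / 2 = t" using two by simp
    have "(2*t - (t + inverse t))^2 = (t + inverse t)^2 - 4"
      using t(1) by (simp add: field_simps power2_eq_square; simp add: algebra_simps)
    thus "2*t - m \<in> {s. s^2 = m^2 - 4}" using t by simp
  next
    fix s assume "s \<in> {s. s^2 = m^2 - 4}"
    hence s: "s^2 = m^2 - 4" by simp
    show "2 * ((s + m) / 2) - m = s" using two
      by (metis add_diff_cancel_right' nonzero_mult_div_cancel_left times_divide_eq_right)
    have "s + m \<noteq> 0"
    proof
      assume "s + m = 0" hence "s = -m" by (simp add: eq_neg_iff_add_eq_0)
      hence "m^2 = m^2 - 4" using s by simp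
      thus False using four_nz by simp
    qed
    define t where "t = (s + m) / 2"
    have tnz: "t \<noteq> 0" unfolding t_def using \<open>s + m \<noteq> 0\<close> two by simp
    have "t * t + 1 = m * t"
    proof -
      have ss: "s * s = m * m - 4" using s by (simp add: power2_eq_square)
      have h1: "4 * (t * t + 1) = (s + m) * (s + m) + 4" unfolding t_def using two four_nz
        by (simp add: field_simps)
      have "(s + m) * (s + m) + 4 - 2 * m * (s + m) = s * s - (m * m - 4)" by (simp add: algebra_simps)
      hence h2: "(s + m) * (s + m) + 4 = 2 * m * (s + m)" using ss by simp
      have h3: "2 * m * (s + m) = 4 * (m * t)" unfolding t_def using two
        by (simp add: field_simps)
      from h1 h2 h3 have "4 * (t * t + 1) = 4 * (m * t)" by simp
      thus ?thesis using four_nz by (metis mult_cancel_left)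
    qed
    hence "t + inverse t = m" using tnz by (simp add: field_simps)
    thus "(s + m) / 2 \<in> {t. t \<noteq> 0 \<and> t + inverse t = m}" using tnz unfolding t_def by simp
  qed simp
  also have "\<dots> = card {s. s^2 = m^2 - 4}" by simp
  finally show ?thesis .
qed

lemma stepc:
  fixes G :: "'a \<Rightarrow> complex"
  shows "(\<Sum>t\<in>UNIV - {0}. G (t + inverse t)) = (\<Sum>m\<in>UNIV. (1 + qchar (m^2 - 4)) * G m)"
proof -
  have "(\<Sum>t\<in>UNIV - {0}. G (t + inverse t))
      = (\<Sum>m\<in>UNIV. \<Sum>t\<in>{t. t \<in> UNIV - {0} \<and> t + inverse t = m}. G (t + inverse t))"
    by (rule sum.group[symmetric]) auto
  also have "\<dots> = (\<Sum>m\<in>UNIV. (1 + qchar (m^2 - 4)) * G m)"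
  proof (rule sum.cong[OF refl])
    fix m :: 'a
    have "(\<Sum>t\<in>{t. t \<in> UNIV - {0} \<and> t + inverse t = m}. G (t + inverse t))
        = (\<Sum>t\<in>{t. t \<in> UNIV - {0} \<and> t + inverse t = m}. G m)"
      by (rule sum.cong) auto
    also have "\<dots> = of_nat (card {s. s^2 = m^2 - 4}) * G m" using fiber_card[of m] by simp
    also have "\<dots> = (1 + qchar (m^2 - 4)) * G m" using roots_card[OF two] by simp
    finally show "(\<Sum>t\<in>{t. t \<in> UNIV - {0} \<and> t + inverse t = m}. G (t + inverse t)) = (1 + qchar (m^2 - 4)) * G m" .
  qed
  finally show ?thesis .
qed

lemma stepc2:
  "(1 + qchar (m^2 - 4)) * GG w m = qchar (m + 2) * HH w m + qchar (m - 2) * HH w m - (if m = -2 then corr w else 0)"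
proof (cases "m = -2")
  case True
  have e1: "w * -2 - 1 - w^2 = - ((1 + w) * (1 + w))" by (simp add: algebra_simps power2_eq_square)
  have "HH w (-2) = A (-1) * A (inverse (1 + w))^2"
    unfolding HH_def e1 using Aneg[of "inverse (1 + w) * inverse (1 + w)"]
    by (simp add: power2_eq_square)
  moreover have "qchar (-4 :: 'a) = qchar (-1::'a)"
  proof -
    have e: "(-4 :: 'a) = -1 * (2 * 2)" by simp
    show ?thesis unfolding e by (simp only: qmult qchar_11[OF two] mult_1_right)
  qed
  ultimately show ?thesis using True by (simp add: GG_def corr_def)
next
  case False
  hence "m + 2 \<noteq> 0" by (simp add: eq_neg_iff_add_eq_0[symmetric])
  have "m^2 - 4 = (m - 2) * (m + 2)" by (simp add: algebra_simps power2_eq_square)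
  hence "qchar (m^2 - 4) = qchar (m - 2) * (qchar (m + 2) :: complex)" by (simp only: qmult)
  hence "(1 + qchar (m^2 - 4)) * GG w m = qchar (m + 2) * HH w m + qchar (m - 2) * (qchar (m + 2) * qchar (m + 2)) * HH w m"
    by (simp add: GG_def HH_def algebra_simps)
  thus ?thesis using qchar_11[OF \<open>m + 2 \<noteq> 0\<close>] False by simp
qed

end


context chr begin

lemma Ainv_mc: "mult_char (\<lambda>x. A (inverse x))"
  using mc unfolding mult_char_def by (auto simp: inverse_mult_distrib)

lemma kdef_zero: "(\<Sum>n\<in>UNIV. qchar n * A (inverse n)) = 0"
proof -
  obtain b where b: "b \<noteq> 0" "A b \<noteq> qchar b" using nphi by blast
  have "qchar b * A (inverse b) \<noteq> 1"
  proof
    assume "qchar b * A (inverse b) = 1"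
    hence "qchar b * (A (inverse b) * A b) = A b" by (simp add: mult.assoc[symmetric])
    thus False using Ainv[OF b(1)] b(2) by simp
  qed
  thus ?thesis using char_sum_zero[OF mc_prod[OF qm Ainv_mc] b(1)] by simp
qed

lemma stepd:
  assumes w: "w \<noteq> 0"
  shows "(\<Sum>n\<in>UNIV. qchar n * A (inverse (w*n - c^2))) = qchar w * A (inverse c)^2 * kap"
proof (cases "c = 0")
  case True
  have "(\<Sum>n\<in>UNIV. qchar n * A (inverse (w*n - c^2))) = A (inverse w) * (\<Sum>n\<in>UNIV. qchar n * A (inverse n))"
    using True by (simp add: sum_distrib_left inverse_mult_distrib algebra_simps)
  thus ?thesis using kdef_zero True by simp
next
  case False
  have "(\<Sum>n\<in>UNIV. qchar n * A (inverse (w*n - c^2))) = (\<Sum>k\<in>UNIV. qchar (c^2*k/w) * A (inverse (w*(c^2*k/w) - c^2)))"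
    by (rule sum.reindex_bij_witness[where j="\<lambda>n. n*w/c^2" and i="\<lambda>k. c^2*k/w"]) (use w False in auto)
  also have "\<dots> = (\<Sum>k\<in>UNIV. qchar w * A (inverse c)^2 * (qchar k * A (inverse (k - 1))))"
  proof (rule sum.cong[OF refl])
    fix k :: 'a
    have e1: "w*(c^2*k/w) - c^2 = c * c * (k - 1)" using w by (simp add: field_simps power2_eq_square)
    have e2: "c^2*k/w = c * c * (k * inverse w)" by (simp add: field_simps power2_eq_square)
    show "qchar (c^2*k/w) * A (inverse (w*(c^2*k/w) - c^2)) = qchar w * A (inverse c)^2 * (qchar k * A (inverse (k - 1)))"
    proof -
      have a1: "A (inverse (w*(c^2*k/w) - c^2)) = A (inverse c)^2 * A (inverse (k - 1))"
        by (simp only: e1) (simp add: inverse_mult_distrib power2_eq_square)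
      have a2: "qchar (c^2*k/w) = qchar w * (qchar k :: complex)"
        by (simp only: e2) (simp add: qchar_11[OF False] mult.assoc[symmetric])
      show ?thesis by (simp only: a1 a2) (simp add: algebra_simps)
    qed
  qed
  also have "\<dots> = qchar w * A (inverse c)^2 * kap" by (simp add: kap_def sum_distrib_left)
  finally show ?thesis .
qed

lemma shift1: "(\<Sum>m\<in>UNIV. qchar (m + 2) * HH w m) = (\<Sum>n\<in>UNIV. qchar n * A (inverse (w*n - (1 + w)^2)))"
proof (rule sum.reindex_bij_witness[where j="\<lambda>m. m + 2" and i="\<lambda>n. n - 2"])
  fix m :: 'a
  have "w * m - 1 - w^2 = w * (m + 2) - (1 + w)^2" by (simp add: algebra_simps power2_eq_square)
  thus "qchar (m + 2) * A (inverse (w * (m + 2) - (1 + w)^2)) = qchar (m + 2) * HH w m"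
    by (simp add: HH_def)
qed auto

lemma shift2: "(\<Sum>m\<in>UNIV. qchar (m - 2) * HH w m) = (\<Sum>n\<in>UNIV. qchar n * A (inverse (w*n - (1 - w)^2)))"
proof (rule sum.reindex_bij_witness[where j="\<lambda>m. m - 2" and i="\<lambda>n. n + 2"])
  fix m :: 'a
  have "w * m - 1 - w^2 = w * (m - 2) - (1 - w)^2" by (simp add: algebra_simps power2_eq_square)
  thus "qchar (m - 2) * A (inverse (w * (m - 2) - (1 - w)^2)) = qchar (m - 2) * HH w m"
    by (simp add: HH_def)
qed auto

lemma P2_sq:
  assumes w: "w \<noteq> 0"
  shows "(\<Sum>y\<in>UNIV. ff (w^2) y) = kap * (A (inverse (1 + w))^2 + A (inverse (1 - w))^2)"
proof -
  let ?g = "\<lambda>t. qchar t * A (t * inverse (w - t) * inverse (1 - w*t))"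
  have "(\<Sum>t\<in>UNIV. ?g t) = (\<Sum>t\<in>UNIV - {0}. ?g t)"
    by (rule sum.mono_neutral_right) auto
  also have "\<dots> = (\<Sum>t\<in>UNIV - {0}. GG w (t + inverse t) + (if t = -1 then corr w else 0))"
    by (rule sum.cong[OF refl]) (use stepb in auto)
  also have "\<dots> = (\<Sum>t\<in>UNIV - {0}. GG w (t + inverse t)) + corr w"
    by (simp add: sum.distrib)
  also have "(\<Sum>t\<in>UNIV - {0}. GG w (t + inverse t)) = (\<Sum>m\<in>UNIV. (1 + qchar (m^2 - 4)) * GG w m)"
    by (rule stepc)
  also have "\<dots> = (\<Sum>m\<in>UNIV. qchar (m + 2) * HH w m + qchar (m - 2) * HH w m - (if m = -2 then corr w else 0))"
    by (rule sum.cong[OF refl]) (rule stepc2)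
  also have "\<dots> = (\<Sum>m\<in>UNIV. qchar (m + 2) * HH w m) + (\<Sum>m\<in>UNIV. qchar (m - 2) * HH w m) - corr w"
    by (simp add: sum.distrib sum_subtractf)
  finally have "(\<Sum>t\<in>UNIV. ?g t) = qchar w * A (inverse (1 + w))^2 * kap + qchar w * A (inverse (1 - w))^2 * kap"
    unfolding shift1 shift2 stepd[OF w] by simp
  hence "(\<Sum>y\<in>UNIV. ff (w^2) y) = (qchar w * qchar w) * (A (inverse (1 + w))^2 + A (inverse (1 - w))^2) * kap"
    unfolding stepa[OF w] by (simp add: algebra_simps)
  thus ?thesis using qchar_11[OF w] by simp
qed

lemma P2_eval: "(\<Sum>y\<in>UNIV. ff l y) = kap * (\<Sum>w\<in>{w. w^2 = l}. A (inverse (1 + w))^2)"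
proof -
  consider "l = 0" | "l \<noteq> 0" "isq l" | "l \<noteq> 0" "\<not> isq l" by blast
  thus ?thesis
  proof cases
    case 1 thus ?thesis using ff_zero by simp
  next
    case 2
    then obtain u where u: "u^2 = l" by (auto simp: isq_def)
    have "u \<noteq> 0" using u 2 by auto
    have "{w. w^2 = l} = {u, -u}" using sq_roots[of u] u by simp
    thus ?thesis using P2_sq[OF \<open>u \<noteq> 0\<close>] u neg_ne[OF two \<open>u \<noteq> 0\<close>] by simp
  next
    case 3
    hence "{w. w^2 = l} = {}" by (auto simp: isq_def)
    thus ?thesis using ff_nonsq[OF 3] by simp
  qed
qed

end


definition TT :: "('a::{finite,field} \<Rightarrow> complex) \<Rightarrow> 'a \<Rightarrow> 'a \<Rightarrow> complex" where
  "TT X c v = (\<Sum>w\<in>{w. w^2 = v}. X (inverse (c * (1 + w)))^2)"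

context chr begin

lemma cnjA: "cnj (A x) = A (inverse x)" using mc_cnj[OF mc] .

lemma P2_conv: "P21 A (char_mult A qchar) qchar l = (\<Sum>y\<in>UNIV. ff l y)"
  unfolding P21_def
proof (rule sum.cong[OF refl])
  fix y :: 'a
  show "char_mult A qchar y * char_mult (char_conj (char_mult A qchar)) qchar (1 - y) * char_conj A (1 - l * y) = ff l y"
  proof (cases "y = 1")
    case True thus ?thesis by (simp add: ff_def char_mult_def char_conj_def)
  next
    case False hence "1 - y \<noteq> 0" by simp
    thus ?thesis using qchar_11[OF \<open>1 - y \<noteq> 0\<close>]
      by (simp add: ff_def char_mult_def char_conj_def cnjA algebra_simps)
  qed
qed

lemma J2_conv: "jacobi (char_mult A qchar) (char_mult qchar (char_conj (char_mult A qchar))) = kap"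
  unfolding ff_zero[symmetric] jacobi_def
proof (rule sum.cong[OF refl])
  fix y :: 'a
  show "char_mult A qchar y * char_mult qchar (char_conj (char_mult A qchar)) (1 - y) = ff 0 y"
  proof (cases "y = 1")
    case True thus ?thesis by (simp add: ff_def char_mult_def char_conj_def)
  next
    case False hence "1 - y \<noteq> 0" by simp
    thus ?thesis using qchar_11[OF \<open>1 - y \<noteq> 0\<close>]
      by (simp add: ff_def char_mult_def char_conj_def cnjA algebra_simps)
  qed
qed

lemma kap_nz: "kap \<noteq> 0"
proof -
  obtain a where a: "a \<noteq> 0" "A a \<noteq> 1" using ntriv by blast
  obtain b where b: "b \<noteq> 0" "A b \<noteq> qchar b" using nphi by blast
  obtain c :: 'a where c: "c \<noteq> 0" "\<not> isq c" using exists_nonsq[OF two] by blast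
  have m1: "mult_char (\<lambda>x. A x * qchar x)" by (rule mc_prod[OF mc qm])
  have c1: "A b * qchar b \<noteq> 1"
  proof
    assume "A b * qchar b = 1"
    hence "A b * (qchar b * qchar b) = qchar b" by (metis mult.assoc mult_1)
    thus False using qchar_11[OF b(1)] b(2) by simp
  qed
  have c2: "A (inverse a) \<noteq> 1" using Ainv[OF a(1)] a(2) by auto
  have c3: "A c * qchar c * A (inverse c) \<noteq> 1"
    using Ainv[OF c(1)] c by (simp add: qchar_simp algebra_simps)
  have "(\<Sum>x\<in>UNIV. A x * qchar x * A (inverse (1 - x))) \<noteq> 0"
    using jac_nz[OF m1 Ainv_mc b(1) c1 a(1) c2 c(1) c3] by simp
  moreover have "(\<Sum>x\<in>UNIV. A x * qchar x * A (inverse (1 - x))) = kap"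
    unfolding ff_zero[symmetric] by (rule sum.cong) (auto simp: ff_def)
  ultimately show ?thesis by simp
qed

lemma F2_closed: "F21 A (char_mult A qchar) qchar z = TT A 1 z"
  unfolding F21_def P2_conv J2_conv P2_eval TT_def using kap_nz by simp

definition f1 :: "'a \<Rightarrow> 'a \<Rightarrow> complex" where
  "f1 z y = qchar y * qchar (1 - y) * A (y * (1 - y) * inverse (1 - z*y))"

lemma P1_conv: "P21 A (char_mult A qchar) (char_pow A 2) l = (\<Sum>y\<in>UNIV. f1 l y)"
  unfolding P21_def
proof (rule sum.cong[OF refl])
  fix y :: 'a
  show "char_mult A qchar y * char_mult (char_conj (char_mult A qchar)) (char_pow A 2) (1 - y) * char_conj A (1 - l * y) = f1 l y"
  proof (cases "y = 1")
    case True thus ?thesis by (simp add: f1_def char_mult_def char_conj_def)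
  next
    case False hence "1 - y \<noteq> 0" by simp
    hence "A (inverse (1 - y)) * A (1 - y)^2 = A (1 - y)" using Ainv[OF \<open>1 - y \<noteq> 0\<close>]
      by (simp add: power2_eq_square mult.assoc[symmetric])
    thus ?thesis
      by (simp add: f1_def char_mult_def char_conj_def char_pow_def cnjA mult_ac)
  qed
qed

lemma J1_conv: "jacobi (char_mult A qchar) (char_mult (char_pow A 2) (char_conj (char_mult A qchar))) = (\<Sum>y\<in>UNIV. f1 0 y)"
  unfolding jacobi_def
proof (rule sum.cong[OF refl])
  fix y :: 'a
  show "char_mult A qchar y * char_mult (char_pow A 2) (char_conj (char_mult A qchar)) (1 - y) = f1 0 y"
  proof (cases "y = 1")
    case True thus ?thesis by (simp add: f1_def char_mult_def char_conj_def)
  next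
    case False hence "1 - y \<noteq> 0" by simp
    hence "A (inverse (1 - y)) * A (1 - y)^2 = A (1 - y)" using Ainv[OF \<open>1 - y \<noteq> 0\<close>]
      by (simp add: power2_eq_square mult.assoc[symmetric])
    thus ?thesis
      by (simp add: f1_def char_mult_def char_conj_def char_pow_def cnjA mult_ac)
  qed
qed

end


context chr begin

lemma P1_P2: "(\<Sum>y\<in>UNIV. ff (1 - z) y) = A (-1) * qchar (-1::'a) * (\<Sum>y\<in>UNIV. f1 z y)"
proof -
  let ?h = "\<lambda>y::'a. if y = 1 then 1 else y / (y - 1)"
  have hh: "?h (?h y) = y" for y
  proof (cases "y = 1")
    case False
    hence "y - 1 \<noteq> 0" by simp
    have "y / (y - 1) \<noteq> 1" using \<open>y - 1 \<noteq> 0\<close> by (simp add: field_simps)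
    moreover have "(y / (y - 1)) / (y / (y - 1) - 1) = y"
    proof -
      have "y / (y - 1) - 1 = 1 / (y - 1)" using \<open>y - 1 \<noteq> 0\<close> by (simp add: field_simps)
      thus ?thesis using \<open>y - 1 \<noteq> 0\<close> by simp
    qed
    ultimately show ?thesis using False by simp
  qed simp
  have "(\<Sum>y\<in>UNIV. ff (1 - z) y) = (\<Sum>y\<in>UNIV. ff (1 - z) (?h y))"
    by (rule sum.reindex_bij_witness[where i="?h" and j="?h"]) (use hh in auto)
  also have "\<dots> = (\<Sum>y\<in>UNIV. A (-1) * qchar (-1::'a) * f1 z y)"
  proof (rule sum.cong[OF refl])
    fix y :: 'a
    show "ff (1 - z) (?h y) = A (-1) * qchar (-1::'a) * f1 z y"
    proof (cases "y = 1")
      case True thus ?thesis by (simp add: ff_def f1_def)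
    next
      case False
      hence y1: "y - 1 \<noteq> 0" "1 - y \<noteq> 0" by auto
      have id: "y / (y - 1) * inverse (1 - y / (y - 1)) * inverse (1 - (1 - z) * (y / (y - 1)))
            = - (y * (1 - y) * inverse (1 - z * y))"
      proof -
        have "1 - y / (y - 1) = inverse (1 - y)" using y1 by (simp add: field_simps)
        hence e1: "inverse (1 - y / (y - 1)) = 1 - y" by simp
        have "1 - (1 - z) * (y / (y - 1)) = (1 - z*y) / (1 - y)" using y1 by (simp add: field_simps; simp add: algebra_simps)
        hence e2: "inverse (1 - (1 - z) * (y / (y - 1))) = (1 - y) * inverse (1 - z*y)"
          by (simp add: divide_inverse mult.commute)
        have e3: "y / (y - 1) * (1 - y) = - y" using y1 by (simp add: field_simps)
        show ?thesis unfolding e1 e2 using e3 by (simp add: mult.assoc[symmetric])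
      qed
      have q: "qchar (y / (y - 1)) = qchar (-1::'a) * (qchar y * qchar (1 - y))"
      proof -
        have "y / (y - 1) = -1 * (y * inverse (1 - y))" using y1 by (simp add: field_simps)
        thus ?thesis by (simp only: qmult qinv)
      qed
      show ?thesis using False unfolding ff_def f1_def
        by (simp only: id q if_False) (subst Aneg, simp add: mult_ac)
    qed
  qed
  also have "\<dots> = A (-1) * qchar (-1::'a) * (\<Sum>y\<in>UNIV. f1 z y)" by (simp add: sum_distrib_left)
  finally show ?thesis .
qed

lemma f1_sum: "(\<Sum>y\<in>UNIV. f1 z y) = A (-1) * qchar (-1::'a) * kap * (\<Sum>w\<in>{w. w^2 = 1 - z}. A (inverse (1 + w))^2)"
proof -
  have c: "A (-1) * qchar (-1::'a) * (A (-1) * qchar (-1::'a)) = 1"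
    using Am1 qchar_11[of "-1::'a"] by (simp add: algebra_simps)
  have "(\<Sum>y\<in>UNIV. f1 z y) = A (-1) * qchar (-1::'a) * (A (-1) * qchar (-1::'a) * (\<Sum>y\<in>UNIV. f1 z y))"
    by (metis c mult.assoc mult_1)
  thus ?thesis unfolding P1_P2[symmetric] P2_eval by (simp add: mult_ac)
qed

lemma F1_closed: "F21 A (char_mult A qchar) (char_pow A 2) z = TT A (inverse 2) (1 - z)"
proof -
  have r1: "{w::'a. w^2 = 1} = {1, -1}" using sq_roots[of "1::'a"] by simp
  have n1: "(1::'a) \<noteq> -1" using neg_ne[OF two, of 1] by simp
  have s1: "(\<Sum>w\<in>{w::'a. w^2 = 1 - 0}. A (inverse (1 + w))^2) = A (inverse 2)^2"
    unfolding diff_zero r1 using n1 by (simp add: one_add_one)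
  have cnz: "A (-1) * qchar (-1::'a) \<noteq> 0" using mc_nz[OF mc] qchar_11[of "-1::'a"] by auto
  have a2: "A (inverse 2) * A 2 = 1" using Ainv[OF two] .
  have "F21 A (char_mult A qchar) (char_pow A 2) z
      = (\<Sum>w\<in>{w. w^2 = 1 - z}. A (inverse (1 + w))^2) / A (inverse 2)^2"
    unfolding F21_def P1_conv J1_conv f1_sum s1 using cnz kap_nz by simp
  also have "\<dots> = (\<Sum>w\<in>{w. w^2 = 1 - z}. A 2^2 * A (inverse (1 + w))^2)"
  proof -
    have h: "A (inverse 2)^2 * A 2^2 = 1" using a2 by (metis power_mult_distrib one_power2)
    have h': "inverse (A (inverse 2)^2) = A 2^2" by (rule inverse_unique[OF h])
    have "(\<Sum>w\<in>{w. w^2 = 1 - z}. A (inverse (1 + w))^2) / A (inverse 2)^2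
         = A 2^2 * (\<Sum>w\<in>{w. w^2 = 1 - z}. A (inverse (1 + w))^2)"
      by (simp only: divide_inverse h' mult.commute)
    thus ?thesis by (simp only: sum_distrib_left)
  qed
  also have "\<dots> = TT A (inverse 2) (1 - z)"
    unfolding TT_def
  proof (rule sum.cong[OF refl])
    fix w :: 'a
    have "inverse (inverse 2 * (1 + w)) = 2 * inverse (1 + w)"
      by (simp only: inverse_mult_distrib inverse_inverse_eq mult.commute)
    thus "A 2^2 * A (inverse (1 + w))^2 = A (inverse (inverse 2 * (1 + w)))^2"
      by (simp only: Amult power_mult_distrib)
  qed
  finally show ?thesis .
qed

end


lemma helperB:
  assumes "mult_char (A::'a::{finite,field} \<Rightarrow> complex)" "mult_char B"
  shows "A (inverse x)^2 * (B (inverse x) * B x)^2 = A (inverse x)^2"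
proof (cases "x = 0")
  case True thus ?thesis using assms by simp
next
  case False thus ?thesis using mc_inv[OF assms(2) False] by simp
qed

lemma TT_prod:
  fixes A B :: "'a::{finite,field} \<Rightarrow> complex"
  assumes two: "(2::'a) \<noteq> 0" and mA: "mult_char A" and mB: "mult_char B" and c: "c \<noteq> 0"
  shows "TT A c v * TT B c v = TT (char_mult A B) c v + B (inverse (c*c*(1-v)))^2 * TT (char_mult A (char_conj B)) c v
           - (if v = 0 then (A (inverse c) * B (inverse c))^2 else 0)"
proof -
  have cjB: "char_conj B x = B (inverse x)" for x unfolding char_conj_def using mc_cnj[OF mB] .
  consider "v = 0" | "v \<noteq> 0" "isq v" | "v \<noteq> 0" "\<not> isq v" by blast
  thus ?thesis
  proof cases
    case 1
    have s: "{w::'a. w^2 = v} = {0}" using 1 by auto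
    have h: "A (inverse c)^2 * (B (inverse c) * B c)^2 = A (inverse c)^2" using helperB[OF mA mB] .
    have "B (inverse (c*c))^2 * (A (inverse c) * B c)^2 = B (inverse c)^2 * (A (inverse c)^2 * (B (inverse c) * B c)^2)"
      using mB by (simp add: inverse_mult_distrib power_mult_distrib)
    also have "\<dots> = B (inverse c)^2 * A (inverse c)^2" using h by simp
    finally have k: "B (inverse (c*c))^2 * (A (inverse c) * B c)^2 = B (inverse c)^2 * A (inverse c)^2" .
    have L: "TT A c v * TT B c v = A (inverse c)^2 * B (inverse c)^2" by (simp add: TT_def s)
    have R1: "TT (char_mult A B) c v = (A (inverse c) * B (inverse c))^2" by (simp add: TT_def s char_mult_def)
    have R2: "TT (char_mult A (char_conj B)) c v = (A (inverse c) * B c)^2" by (simp add: TT_def s char_mult_def cjB)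
    have cc: "c*c*(1-v) = c*c" using 1 by simp
    show ?thesis unfolding L R1 R2 cc k using 1 by (simp add: power_mult_distrib mult.commute)
  next
    case 2
    then obtain u where u: "u^2 = v" by (auto simp: isq_def)
    have "u \<noteq> 0" using u 2 by auto
    have s: "{w. w^2 = v} = {u, -u}" using sq_roots[of u] u by simp
    have ne: "u \<noteq> -u" using neg_ne[OF two \<open>u \<noteq> 0\<close>] .
    define p where "p = c * (1 + u)"
    define m where "m = c * (1 + - u)"
    have pm: "c*c*(1-v) = p * m" unfolding p_def m_def u[symmetric] by (simp add: algebra_simps power2_eq_square)
    define a1 where "a1 = A (inverse p)"
    define a2 where "a2 = A (inverse m)"
    define b1 where "b1 = B (inverse p)"
    define b2 where "b2 = B (inverse m)"
    have h1: "a1^2 * (b1 * B p)^2 = a1^2" unfolding a1_def b1_def by (rule helperB[OF mA mB])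
    have h2: "a2^2 * (b2 * B m)^2 = a2^2" unfolding a2_def b2_def by (rule helperB[OF mA mB])
    have bb: "B (inverse (p * m)) = b1 * b2" unfolding b1_def b2_def using mB by (simp add: inverse_mult_distrib)
    have L: "TT A c v * TT B c v = (a1^2 + a2^2) * (b1^2 + b2^2)"
      unfolding TT_def s using ne by (simp add: a1_def a2_def b1_def b2_def p_def m_def)
    have R1: "TT (char_mult A B) c v = (a1*b1)^2 + (a2*b2)^2"
      unfolding TT_def s using ne by (simp add: a1_def a2_def b1_def b2_def p_def m_def char_mult_def)
    have R2: "TT (char_mult A (char_conj B)) c v = (a1 * B p)^2 + (a2 * B m)^2"
      unfolding TT_def s using ne by (simp add: a1_def a2_def p_def m_def char_mult_def cjB)
    have "(b1*b2)^2 * ((a1 * B p)^2 + (a2 * B m)^2) = b2^2 * (a1^2 * (b1 * B p)^2) + b1^2 * (a2^2 * (b2 * B m)^2)"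
      by (simp add: algebra_simps power_mult_distrib)
    also have "\<dots> = b2^2 * a1^2 + b1^2 * a2^2" unfolding h1 h2 ..
    finally have R3: "(b1*b2)^2 * ((a1 * B p)^2 + (a2 * B m)^2) = b2^2 * a1^2 + b1^2 * a2^2" .
    show ?thesis unfolding L R1 R2 pm bb R3 using 2 by (simp add: algebra_simps power_mult_distrib)
  next
    case 3
    hence s: "{w::'a. w^2 = v} = {}" by (auto simp: isq_def)
    show ?thesis unfolding TT_def s using 3 by simp
  qed
qed

lemma order_facts:
  fixes X :: "'a::{finite,field} \<Rightarrow> complex"
  assumes mX: "mult_char X" and o: "char_order X > 2"
  shows "(\<exists>a. a \<noteq> 0 \<and> X a \<noteq> 1) \<and> (\<exists>b. b \<noteq> 0 \<and> X b \<noteq> qchar b)"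
proof (intro conjI)
  show "\<exists>a. a \<noteq> 0 \<and> X a \<noteq> 1"
  proof (rule ccontr)
    assume "\<not> ?thesis"
    hence "(1::nat) > 0 \<and> (\<forall>x. x \<noteq> 0 \<longrightarrow> X x ^ 1 = 1)" by auto
    hence "char_order X \<le> 1" unfolding char_order_def by (rule Least_le)
    thus False using o by simp
  qed
  show "\<exists>b. b \<noteq> 0 \<and> X b \<noteq> qchar b"
  proof (rule ccontr)
    assume "\<not> ?thesis"
    hence "(2::nat) > 0 \<and> (\<forall>x. x \<noteq> 0 \<longrightarrow> X x ^ 2 = 1)"
    proof (intro conjI allI impI)
      fix x :: 'a assume "x \<noteq> 0"
      hence "X x = qchar x" using \<open>\<not> (\<exists>b. b \<noteq> 0 \<and> X b \<noteq> qchar b)\<close> by blast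
      thus "X x ^ 2 = 1" using qchar_11[OF \<open>x \<noteq> 0\<close>] by (simp add: power2_eq_square)
    qed simp
    hence "char_order X \<le> 2" unfolding char_order_def by (rule Least_le)
    thus False using o by simp
  qed
qed



lemma mc_conj: "mult_char (B::'a::{finite,field} \<Rightarrow> complex) \<Longrightarrow> mult_char (char_conj B)"
  unfolding mult_char_def char_conj_def by auto

lemma mc_cm: "mult_char (A::'a::{finite,field} \<Rightarrow> complex) \<Longrightarrow> mult_char B \<Longrightarrow> mult_char (char_mult A B)"
  unfolding char_mult_def by (rule mc_prod)

lemma chr_intro: "(2::'a::{finite,field}) \<noteq> 0 \<Longrightarrow> mult_char (X::'a \<Rightarrow> complex) \<Longrightarrow> char_order X > 2 \<Longrightarrow> chr X"
  unfolding chr_def using order_facts by blast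

theorem mainTheorem6:
  fixes A B :: "'a::{finite,field} \<Rightarrow> complex"
  assumes odd_char: "(2::'a) \<noteq> 0"
    and A: "mult_char A" and B: "mult_char B"
    and oA: "char_order A > 2" and oB: "char_order B > 2"
    and oAB: "char_order (char_mult A B) > 2"
    and oAcB: "char_order (char_mult A (char_conj B)) > 2"
  shows "(\<forall>z::'a.
     F21 A (char_mult A qchar) (char_pow A 2) z * F21 B (char_mult B qchar) (char_pow B 2) z
       = F21 (char_mult A B) (char_mult (char_mult A B) qchar) (char_pow (char_mult A B) 2) z
         + char_pow (char_conj B) 2 (z / 4) *
           F21 (char_mult A (char_conj B)) (char_mult (char_mult A (char_conj B)) qchar)
               (char_pow (char_mult A (char_conj B)) 2) z
         - kdelta (1 - z) * char_mult A B 4)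
    \<and> (\<forall>z::'a.
     F21 A (char_mult A qchar) qchar z * F21 B (char_mult B qchar) qchar z
       = F21 (char_mult A B) (char_mult (char_mult A B) qchar) qchar z
         + char_pow (char_conj B) 2 (1 - z) *
           F21 (char_mult A (char_conj B)) (char_mult (char_mult A (char_conj B)) qchar) qchar z
         - kdelta z)"
proof -
  have cA: "chr A" by (rule chr_intro[OF odd_char A oA])
  have cB: "chr B" by (rule chr_intro[OF odd_char B oB])
  have cAB: "chr (char_mult A B)" by (rule chr_intro[OF odd_char mc_cm[OF A B] oAB])
  have cAcB: "chr (char_mult A (char_conj B))" by (rule chr_intro[OF odd_char mc_cm[OF A mc_conj[OF B]] oAcB])
  have i2: "inverse (2::'a) \<noteq> 0" using odd_char by simp
  have cjB: "cnj (B x) = B (inverse x)" for x using mc_cnj[OF B] .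
  show ?thesis
  proof (intro conjI allI)
    fix z :: 'a
    have e: "inverse 2 * inverse 2 * (1 - (1 - z)) = z / (4::'a)"
    proof -
      have f: "(4::'a) = 2 * 2" by simp
      have g: "1 - (1 - z) = z" by simp
      show ?thesis by (simp only: f g inverse_mult_distrib divide_inverse mult.commute)
    qed
    have a4: "A 4 = A 2 * A (2::'a)" using mc_mult[OF A, of 2 2] by simp
    have b4: "B 4 = B 2 * B (2::'a)" using mc_mult[OF B, of 2 2] by simp
    show "F21 A (char_mult A qchar) (char_pow A 2) z * F21 B (char_mult B qchar) (char_pow B 2) z
       = F21 (char_mult A B) (char_mult (char_mult A B) qchar) (char_pow (char_mult A B) 2) z
         + char_pow (char_conj B) 2 (z / 4) *
           F21 (char_mult A (char_conj B)) (char_mult (char_mult A (char_conj B)) qchar)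
               (char_pow (char_mult A (char_conj B)) 2) z
         - kdelta (1 - z) * char_mult A B 4"
      unfolding chr.F1_closed[OF cA] chr.F1_closed[OF cB] chr.F1_closed[OF cAB] chr.F1_closed[OF cAcB]
        TT_prod[OF odd_char A B i2, of "1 - z"] e
      by (simp add: char_pow_def char_conj_def cjB kdelta_def char_mult_def a4 b4 power2_eq_square mult_ac)
  next
    fix z :: 'a
    show "F21 A (char_mult A qchar) qchar z * F21 B (char_mult B qchar) qchar z
       = F21 (char_mult A B) (char_mult (char_mult A B) qchar) qchar z
         + char_pow (char_conj B) 2 (1 - z) *
           F21 (char_mult A (char_conj B)) (char_mult (char_mult A (char_conj B)) qchar) qchar z
         - kdelta z"
      unfolding chr.F2_closed[OF cA] chr.F2_closed[OF cB] chr.F2_closed[OF cAB] chr.F2_closed[OF cAcB]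
        TT_prod[OF odd_char A B one_neq_zero, of z]
      by (simp add: char_pow_def char_conj_def cjB kdelta_def mc_one[OF A] mc_one[OF B])
  qed
qed


end
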